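(* Let $n\ge1$, $1\le i\le n$ be integers, $\alpha,\beta>0$, $\tau\ge0$ with $i\beta(\tau+1)>\tau$. Put $a=\frac{(n-i+1)\tau\beta+(n-i+1)\beta+\tau}{\beta}$ and $b=\frac{i\tau\beta+i\beta-\tau}{\beta}$. Then $$\xi^{(i)}_\tau(\beta)=\int_0^\infty\frac{\partial}{\partial\beta}\log f^{(i)}_{\alpha,\beta}(x)\, f^{(i)}_{\alpha,\beta}(x)^{\tau+1}dx=\left(\frac{\beta}{\alpha}\right)^{\tau}\frac{c(i,n)^{\tau+1}}{\beta}B(a,b)\,\frac{\tau}{1+\tau}\left[\frac1\beta\big(\Psi(b)-\Psi(a)\big)+1\right],$$ and $K^{(i)}_\tau(\beta)=J^{(i)}_{2\tau}(\beta)-\xi^{(i)}_\tau(\beta)^2$.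
   Context: $c(i,n)=\frac{n!}{(n-i)!(i-1)!}$ and $f^{(i)}_{\alpha,\beta}(x)=\frac{c(i,n)\beta (x/\alpha)^{i\beta-1}}{\alpha(1+(x/\alpha)^\beta)^{n+1}}$, $x>0$, is the density of the $i$-th order statistic of a sample of size $n$ from the log-logistic distribution with scale $\alpha$ and shape $\beta$. Derivatives are with respect to $\beta$ with $\alpha$ known; $J^{(i)}_\tau(\beta)=\int_0^\infty(\partial_\beta\log f^{(i)}_{\alpha,\beta})^2(f^{(i)}_{\alpha,\beta})^{\tau+1}dx$, and $K^{(i)}_\tau(\beta)$ denotes $J^{(i)}_{2\tau}(\beta)-\xi^{(i)}_\tau(\beta)^2$. $B$ is the Beta function and $\Psi$ the digamma function. *)

theory Defs
  imports "HOL-Analysis.Analysis"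
begin

definition cc :: "nat \<Rightarrow> nat \<Rightarrow> real" where
  "cc i n = fact n / (fact (n - i) * fact (i - 1))"

text \<open>Density of the i-th order statistic of a size-n log-logistic sample
  (scale alpha, shape beta), for x > 0.\<close>
definition fos :: "nat \<Rightarrow> nat \<Rightarrow> real \<Rightarrow> real \<Rightarrow> real \<Rightarrow> real" where
  "fos i n \<alpha> \<beta> x =
     cc i n * \<beta> * (x / \<alpha>) powr (real i * \<beta> - 1)
       / (\<alpha> * (1 + (x / \<alpha>) powr \<beta>) ^ (n + 1))"

definition score :: "nat \<Rightarrow> nat \<Rightarrow> real \<Rightarrow> real \<Rightarrow> real \<Rightarrow> real" where
  "score i n \<alpha> \<beta> x = deriv (\<lambda>b. ln (fos i n \<alpha> b x)) \<beta>"

definition xi :: "nat \<Rightarrow> nat \<Rightarrow> real \<Rightarrow> real \<Rightarrow> real \<Rightarrow> real" where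
  "xi i n \<alpha> \<tau> \<beta> =
     integral {0<..} (\<lambda>x. score i n \<alpha> \<beta> x * fos i n \<alpha> \<beta> x powr (\<tau> + 1))"

definition J :: "nat \<Rightarrow> nat \<Rightarrow> real \<Rightarrow> real \<Rightarrow> real \<Rightarrow> real" where
  "J i n \<alpha> \<tau> \<beta> =
     integral {0<..} (\<lambda>x. (score i n \<alpha> \<beta> x)\<^sup>2 * fos i n \<alpha> \<beta> x powr (\<tau> + 1))"

definition K :: "nat \<Rightarrow> nat \<Rightarrow> real \<Rightarrow> real \<Rightarrow> real \<Rightarrow> real" where
  "K i n \<alpha> \<tau> \<beta> = J i n \<alpha> (2 * \<tau>) \<beta> - (xi i n \<alpha> \<tau> \<beta>)\<^sup>2"

end

theory Submission
  imports Defs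
begin


lemma deriv_under_integral:
  fixes g g' :: "real \<Rightarrow> real \<Rightarrow> real" and h :: "real \<Rightarrow> real" and S :: "real set"
  assumes d: "\<delta> > 0"
    and der: "\<And>s x. \<bar>s - p\<bar> < \<delta> \<Longrightarrow> x \<in> S \<Longrightarrow> ((\<lambda>s. g s x) has_real_derivative g' s x) (at s)"
    and int: "\<And>s. \<bar>s - p\<bar> < \<delta> \<Longrightarrow> g s integrable_on S"
    and bnd: "\<And>s x. \<bar>s - p\<bar> < \<delta> \<Longrightarrow> x \<in> S \<Longrightarrow> \<bar>g' s x\<bar> \<le> h x"
    and hint: "h integrable_on S"
  shows "g' p integrable_on S"
    and "((\<lambda>s. integral S (g s)) has_real_derivative integral S (g' p)) (at p)"
proof -
  have mvt: "\<bar>(g (p + t) x - g p x) / t\<bar> \<le> h x" if "\<bar>t\<bar> < \<delta>" "t \<noteq> 0" "x \<in> S" for t x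
  proof (cases "t > 0")
    case True
    have "\<exists>z. p < z \<and> z < p + t \<and> (\<lambda>s. g s x) (p + t) - (\<lambda>s. g s x) p = (p + t - p) * g' z x"
      by (rule MVT2) (use True that in \<open>auto intro!: der\<close>)
    then obtain z where z: "p < z" "z < p + t" "g (p + t) x - g p x = t * g' z x" by auto
    have "\<bar>g' z x\<bar> \<le> h x" using z that by (intro bnd) auto
    then show ?thesis using z True by simp
  next
    case False
    then have tn: "t < 0" using that by auto
    have "\<exists>z. p + t < z \<and> z < p \<and> (\<lambda>s. g s x) p - (\<lambda>s. g s x) (p + t) = (p - (p + t)) * g' z x"
      by (rule MVT2) (use tn that in \<open>auto intro!: der\<close>)
    then obtain z where z: "p + t < z" "z < p" "g p x - g (p + t) x = (- t) * g' z x" by auto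
    have "\<bar>g' z x\<bar> \<le> h x" using z that by (intro bnd) auto
    moreover have "(g (p + t) x - g p x) / t = g' z x" using z tn
      by (simp add: field_simps)
    ultimately show ?thesis by simp
  qed
  have lim: "(\<lambda>k. (g (p + X k) x - g p x) / X k) \<longlonglongrightarrow> g' p x"
    if "x \<in> S" "X \<longlonglongrightarrow> 0" "\<And>k. X k \<noteq> 0" for X x
  proof -
    have "((\<lambda>t. (g (p + t) x - g p x) / t) \<longlongrightarrow> g' p x) (at 0)"
      using der[of p x] d that by (simp add: DERIV_def)
    moreover have "filterlim X (at 0) sequentially"
      by (rule filterlim_atI) (use that in auto)
    ultimately show ?thesis by (rule filterlim_compose)
  qed
  have main: "(\<lambda>k. (integral S (g (p + X k)) - integral S (g p)) / X k) \<longlonglongrightarrow> integral S (g' p)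
     \<and> g' p integrable_on S"
    if X: "X \<longlonglongrightarrow> 0" "\<And>k. X k \<noteq> 0" for X
  proof -
    obtain N where N: "\<And>k. k \<ge> N \<Longrightarrow> \<bar>X k\<bar> < \<delta>"
      using X(1) d unfolding LIMSEQ_def dist_real_def by fastforce
    define Y where "Y k = X (k + N)" for k
    have Y0: "Y \<longlonglongrightarrow> 0" unfolding Y_def using X(1) by (rule LIMSEQ_ignore_initial_segment)
    have Yd: "\<bar>Y k\<bar> < \<delta>" "Y k \<noteq> 0" for k unfolding Y_def using N X(2) by auto
    define q where "q k x = (g (p + Y k) x - g p x) / Y k" for k x
    have qi: "q k integrable_on S" for k
      unfolding q_def using Yd d by (intro integrable_on_divide integrable_diff int) auto
    have qint: "integral S (q k) = (integral S (g (p + Y k)) - integral S (g p)) / Y k" for k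
      unfolding q_def using Yd d by (subst integral_divide integral_diff; (intro integrable_diff int)?; auto)+
    have qb: "norm (q k x) \<le> h x" if "x \<in> S" for k x
      unfolding q_def real_norm_def using mvt[OF Yd(1) Yd(2) that] .
    have ql: "(\<lambda>k. q k x) \<longlonglongrightarrow> g' p x" if "x \<in> S" for x
      unfolding q_def using lim[OF that Y0 Yd(2)] .
    have dc: "g' p integrable_on S" "(\<lambda>k. integral S (q k)) \<longlonglongrightarrow> integral S (g' p)"
      using dominated_convergence[OF qi hint qb ql] by auto
    show ?thesis using dc(2) unfolding qint Y_def
      using LIMSEQ_offset[where f="\<lambda>k. (integral S (g (p + X k)) - integral S (g p)) / X k" and k=N] dc(1) by blast
  qed
  show "g' p integrable_on S" using main[of "\<lambda>k. 1 / (Suc k)"]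
    using LIMSEQ_inverse_real_of_nat by (simp add: inverse_eq_divide)
  show "((\<lambda>s. integral S (g s)) has_real_derivative integral S (g' p)) (at p)"
    unfolding DERIV_def tendsto_at_iff_sequentially
    using main by (auto simp: o_def)
qed


lemma ln_bound: fixes t e :: real assumes "0 < t" "t < 1" "e > 0" shows "\<bar>ln t\<bar> \<le> t powr (-e) / e"
proof -
  have "ln (t powr (-e)) \<le> t powr (-e) - 1" using ln_le_minus_one[of "t powr (-e)"] assms by simp
  then have "- e * ln t \<le> t powr (-e)" using assms by (simp add: ln_powr)
  moreover have "ln t < 0" using assms by simp
  ultimately show ?thesis using assms by (simp add: field_simps)
qed

lemma beta_log1:
  fixes p q :: real
  assumes p: "p > 0" and q: "q > 0"
  shows "(\<lambda>t. t powr (p - 1) * (1 - t) powr (q - 1) * ln t) absolutely_integrable_on {0<..<1}"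
    "((\<lambda>t. t powr (p - 1) * (1 - t) powr (q - 1) * ln t) has_integral
        (Beta p q * (Digamma p - Digamma (p + q)))) {0<..<1}"
proof -
  define g where "g s t = t powr (s - 1) * (1 - t) powr (q - 1)" for s t :: real
  define g' where "g' s t = t powr (s - 1) * (1 - t) powr (q - 1) * ln t" for s t :: real
  define h where "h t = (4 / p) * (t powr (p / 4 - 1) * (1 - t) powr (q - 1))" for t :: real
  have hi: "h integrable_on {0<..<1}" unfolding h_def
    using integrable_Beta'[of "p/4" q] p q by (intro integrable_on_mult_right) (auto simp: integrable_on_Icc_iff_Ioo)
  have der: "((\<lambda>s. g s x) has_real_derivative g' s x) (at s)" if "x \<in> {0<..<1}" for s x
    unfolding g_def g'_def using that
    by (auto intro!: derivative_eq_intros simp: powr_def)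
  have gi: "g s integrable_on {0<..<1}" if "\<bar>s - p\<bar> < p / 2" for s
  proof -
    have "s > 0" using that p by linarith
    then show ?thesis unfolding g_def using integrable_Beta'[of s q] q by (auto simp: integrable_on_Icc_iff_Ioo)
  qed
  have bnd: "\<bar>g' s x\<bar> \<le> h x" if "\<bar>s - p\<bar> < p / 2" "x \<in> {0<..<1}" for s x
  proof -
    have x: "0 < x" "x < 1" using that by auto
    have sp: "p / 2 - 1 \<le> s - 1" using that(1) by linarith
    have "\<bar>g' s x\<bar> = x powr (s - 1) * \<bar>ln x\<bar> * (1 - x) powr (q - 1)"
      unfolding g'_def by (simp add: abs_mult)
    also have "\<dots> \<le> x powr (p / 2 - 1) * (x powr (- (p/4)) / (p/4)) * (1 - x) powr (q - 1)"
      using that x p sp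
      by (intro mult_right_mono mult_mono powr_mono' ln_bound) auto
    also have "\<dots> = h x" unfolding h_def using x p
      by (simp add: field_simps powr_add[symmetric]) (rule arg_cong[where f="\<lambda>e. x powr e"]; simp add: field_simps)
    finally show ?thesis .
  qed
  have p2: "p / 2 > 0" using p by simp
  note D = deriv_under_integral[where g=g and g'=g' and S="{0<..<1}" and h=h and p=p, OF p2 der gi bnd hi]
  have F: "integral {0<..<1} (g s) = Beta s q" if "s > 0" for s
    using has_integral_Beta_real[of s q] that q unfolding g_def
    by (auto simp: has_integral_Icc_iff_Ioo)
  have "((\<lambda>s. Beta s q) has_real_derivative integral {0<..<1} (g' p)) (at p)"
    by (rule has_field_derivative_transform_within_open[OF D(2), of "{0<..}"]) (use p F in auto)
  moreover have "((\<lambda>s. Beta s q) has_real_derivative Beta p q * (Digamma p - Digamma (p + q))) (at p)"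
    using p q by (intro has_field_derivative_Beta1) (auto elim!: nonpos_Ints_cases)
  ultimately have E: "integral {0<..<1} (g' p) = Beta p q * (Digamma p - Digamma (p + q))"
    by (rule DERIV_unique)
  have "g' p absolutely_integrable_on {0<..<1}"
    by (rule absolutely_integrable_integrable_bound[OF _ D(1) hi]) (use bnd p in auto)
  then show "(\<lambda>t. t powr (p - 1) * (1 - t) powr (q - 1) * ln t) absolutely_integrable_on {0<..<1}"
    unfolding g'_def .
  show "((\<lambda>t. t powr (p - 1) * (1 - t) powr (q - 1) * ln t) has_integral
        (Beta p q * (Digamma p - Digamma (p + q)))) {0<..<1}"
    using D(1) E unfolding g'_def by (metis has_integral_integral)
qed


lemma beta_log2:
  fixes p q :: real
  assumes p: "p > 0" and q: "q > 0"
  shows "(\<lambda>t. t powr (p - 1) * (1 - t) powr (q - 1) * ln (1 - t)) absolutely_integrable_on {0<..<1}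
    \<and> integral {0<..<1} (\<lambda>t. t powr (p - 1) * (1 - t) powr (q - 1) * ln (1 - t)) =
        Beta p q * (Digamma q - Digamma (p + q))"
proof -
  have img: "(\<lambda>t. 1 - t) ` {0<..<1} = {0<..<(1::real)}"
    by (auto simp: image_iff intro!: bexI[where x="1 - x" for x])
  have der: "((\<lambda>t. 1 - t) has_field_derivative (- 1)) (at x within {0<..<1})" for x :: real
    by (auto intro!: derivative_eq_intros)
  note cv = has_absolute_integral_change_of_variables_1'[where S="{0<..<1}" and g="\<lambda>t. 1 - t" and g'="\<lambda>_. -1"
      and f="\<lambda>t. t powr (p - 1) * (1 - t) powr (q - 1) * ln (1 - t)" and b="Beta p q * (Digamma q - Digamma (p + q))",
      OF _ der, unfolded img]
  have eq: "(\<lambda>x. \<bar>-1\<bar> * ((1 - x) powr (p - 1) * (1 - (1 - x)) powr (q - 1) * ln (1 - (1 - x)))) =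
        (\<lambda>t. t powr (q - 1) * (1 - t) powr (p - 1) * ln t)" by (auto simp: fun_eq_iff)
  have "Beta q p * (Digamma q - Digamma (q + p)) = Beta p q * (Digamma q - Digamma (p + q))"
    by (simp add: Beta_commute add.commute)
  moreover have "(\<lambda>x. (1 - x) powr (p - 1) * x powr (q - 1) * ln x) = (\<lambda>t. t powr (q - 1) * (1 - t) powr (p - 1) * ln t)"
    by (auto simp: fun_eq_iff)
  ultimately show ?thesis using beta_log1[OF q p] cv
    by (simp add: eq inj_on_def integral_unique)
qed

lemma beta_logdiff:
  fixes p q :: real
  assumes p: "p > 0" and q: "q > 0"
  shows "(\<lambda>t. t powr (p - 1) * (1 - t) powr (q - 1) * (ln t - ln (1 - t))) absolutely_integrable_on {0<..<1}"
    "((\<lambda>t. t powr (p - 1) * (1 - t) powr (q - 1) * (ln t - ln (1 - t))) has_integral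
        Beta p q * (Digamma p - Digamma q)) {0<..<1}"
proof -
  note A1 = beta_log1[OF p q] and A2 = beta_log2[OF p q]
  have "(\<lambda>t. t powr (p - 1) * (1 - t) powr (q - 1) * ln t - t powr (p - 1) * (1 - t) powr (q - 1) * ln (1 - t))
     absolutely_integrable_on {0<..<1}"
    using A1(1) A2 by (intro set_integral_diff(1)) auto
  then show "(\<lambda>t. t powr (p - 1) * (1 - t) powr (q - 1) * (ln t - ln (1 - t))) absolutely_integrable_on {0<..<1}"
    by (simp add: algebra_simps)
  have "((\<lambda>t. t powr (p - 1) * (1 - t) powr (q - 1) * ln t - t powr (p - 1) * (1 - t) powr (q - 1) * ln (1 - t))
     has_integral (Beta p q * (Digamma p - Digamma (p + q)) - Beta p q * (Digamma q - Digamma (p + q)))) {0<..<1}"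
  proof (intro has_integral_diff A1(2))
    from A2 have "(\<lambda>t. t powr (p - 1) * (1 - t) powr (q - 1) * ln (1 - t)) integrable_on {0<..<1}"
      by (simp add: absolutely_integrable_on_def)
    from integrable_integral[OF this] A2
    show "((\<lambda>t. t powr (p - 1) * (1 - t) powr (q - 1) * ln (1 - t)) has_integral Beta p q * (Digamma q - Digamma (p + q))) {0<..<1}"
      by simp
  qed
  then show "((\<lambda>t. t powr (p - 1) * (1 - t) powr (q - 1) * (ln t - ln (1 - t))) has_integral
        Beta p q * (Digamma p - Digamma q)) {0<..<1}"
    by (simp add: algebra_simps)
qed


lemma cc_pos: "cc i n > 0"
  unfolding cc_def by simp

lemma ln_fos:
  assumes a: "\<alpha> > 0" and b: "b > 0" and x: "x > 0"
  shows "fos i n \<alpha> b x > 0"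
    "ln (fos i n \<alpha> b x) = ln (cc i n) + ln b - ln \<alpha> + (real i * b - 1) * ln (x / \<alpha>)
        - real (n + 1) * ln (1 + exp (b * ln (x / \<alpha>)))"
proof -
  have xa: "x / \<alpha> > 0" using a x by simp
  have e: "(x / \<alpha>) powr b = exp (b * ln (x / \<alpha>))" using xa a x by (simp add: powr_def)
  have pp: "1 + (x / \<alpha>) powr b > 0" using xa by (simp add: add_pos_nonneg)
  show "fos i n \<alpha> b x > 0" unfolding fos_def using pp a b xa cc_pos[of i n] by (auto intro!: divide_pos_pos mult_pos_pos)
  have "ln (fos i n \<alpha> b x) = ln (cc i n * b * (x / \<alpha>) powr (real i * b - 1)) - ln (\<alpha> * (1 + (x / \<alpha>) powr b) ^ (n + 1))"
    unfolding fos_def using pp a b xa cc_pos[of i n] by (intro ln_divide_pos mult_pos_pos) auto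
  also have "\<dots> = ln (cc i n) + ln b - ln \<alpha> + (real i * b - 1) * ln (x / \<alpha>)
        - real (n + 1) * ln (1 + exp (b * ln (x / \<alpha>)))"
  proof -
    have q: "1 + exp (b * ln (x / \<alpha>)) > 0" by (simp add: add_pos_pos)
    have "ln (cc i n * b * (x / \<alpha>) powr (real i * b - 1)) = ln (cc i n) + ln b + (real i * b - 1) * ln (x / \<alpha>)"
      using a b xa x cc_pos[of i n] by (simp add: ln_mult ln_powr)
    moreover have "ln (\<alpha> * (1 + (x / \<alpha>) powr b) ^ (n + 1)) = ln \<alpha> + real (n + 1) * ln (1 + exp (b * ln (x / \<alpha>)))"
      unfolding e using a q by (simp add: ln_mult ln_realpow del: of_nat_Suc) (simp add: algebra_simps)
    ultimately show ?thesis by simp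
  qed
  finally show "ln (fos i n \<alpha> b x) = ln (cc i n) + ln b - ln \<alpha> + (real i * b - 1) * ln (x / \<alpha>)
        - real (n + 1) * ln (1 + exp (b * ln (x / \<alpha>)))" .
qed

lemma score_eq:
  assumes a: "\<alpha> > 0" and b: "\<beta> > 0" and x: "x > 0"
  shows "score i n \<alpha> \<beta> x = 1 / \<beta> + real i * ln (x / \<alpha>)
     - real (n + 1) * (exp (\<beta> * ln (x / \<alpha>)) * ln (x / \<alpha>) / (1 + exp (\<beta> * ln (x / \<alpha>))))"
proof -
  define L where "L = ln (x / \<alpha>)"
  have D: "((\<lambda>b. ln (cc i n) + ln b - ln \<alpha> + (real i * b - 1) * L - real (n + 1) * ln (1 + exp (b * L)))
     has_real_derivative (1 / \<beta> + real i * L - real (n + 1) * (exp (\<beta> * L) * L / (1 + exp (\<beta> * L))))) (at \<beta>)"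
    using b by (auto intro!: derivative_eq_intros simp: add_divide_distrib[symmetric] algebra_simps add_pos_pos)
  have "((\<lambda>b. ln (fos i n \<alpha> b x)) has_real_derivative
      (1 / \<beta> + real i * L - real (n + 1) * (exp (\<beta> * L) * L / (1 + exp (\<beta> * L))))) (at \<beta>)"
    by (rule has_field_derivative_transform_within_open[OF D, of "{0<..}"])
       (use b a x in \<open>auto simp: ln_fos L_def\<close>)
  then show ?thesis unfolding score_def L_def by (rule DERIV_imp_deriv)
qed


lemma pointwise:
  fixes n i :: nat and \<alpha> \<beta> \<tau> a b t :: real
  assumes "i \<le> n" and al: "\<alpha> > 0" and be: "\<beta> > 0" and "\<tau> \<ge> 0"
    and adef: "a = (real (n - i + 1) * \<tau> * \<beta> + real (n - i + 1) * \<beta> + \<tau>) / \<beta>"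
    and bdef: "b = (real i * \<tau> * \<beta> + real i * \<beta> - \<tau>) / \<beta>"
    and t: "0 < t" "t < 1"
  shows "(\<alpha> * exp ((ln t - ln (1 - t)) / \<beta>) * ((1 / t + 1 / (1 - t)) / \<beta>)) *
      (score i n \<alpha> \<beta> (\<alpha> * exp ((ln t - ln (1 - t)) / \<beta>)) *
       fos i n \<alpha> \<beta> (\<alpha> * exp ((ln t - ln (1 - t)) / \<beta>)) powr (\<tau> + 1))
    = ((\<beta> / \<alpha>) powr \<tau> * cc i n powr (\<tau> + 1) / \<beta>) *
      (t powr (b - 1) * (1 - t) powr (a - 1) * (1 + (ln t - ln (1 - t)) * (real i - real (n + 1) * t)))"
proof -
  define P where "P = ln t"
  define Q where "Q = ln (1 - t)"
  define x where "x = \<alpha> * exp ((P - Q) / \<beta>)"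
  define c where "c = cc i n"
  have c: "c > 0" unfolding c_def by (rule cc_pos)
  have tP: "t = exp P" and tQ: "1 - t = exp Q" using t by (simp_all add: P_def Q_def)
  have x: "x > 0" unfolding x_def using al by simp
  have lx: "ln (x / \<alpha>) = (P - Q) / \<beta>" unfolding x_def using al by simp
  have ex: "exp (\<beta> * ln (x / \<alpha>)) = t / (1 - t)" unfolding lx using be t
    by (simp add: P_def Q_def exp_diff)
  have ex2: "exp (\<beta> * ((P - Q) / \<beta>)) = t / (1 - t)" using ex unfolding lx .
  have ex1: "1 + t / (1 - t) = 1 / (1 - t)" using t by (simp add: field_simps)
  have lnf: "ln (fos i n \<alpha> \<beta> x) = ln c + ln \<beta> - ln \<alpha> + (real i * \<beta> - 1) * ((P - Q) / \<beta>) + real (n + 1) * Q"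
  proof -
    have "ln (1 + exp (\<beta> * ln (x / \<alpha>))) = - Q" unfolding ex ex1 using t by (simp add: Q_def ln_div)
    then show ?thesis using ln_fos(2)[OF al be x, of i n] unfolding lx c_def by simp
  qed
  have fpos: "fos i n \<alpha> \<beta> x > 0" using ln_fos(1)[OF al be x] .
  have sc: "score i n \<alpha> \<beta> x = (1 + (P - Q) * (real i - real (n + 1) * t)) / \<beta>"
  proof -
    have r: "t / (1 - t) * ((P - Q) / \<beta>) / (1 + t / (1 - t)) = t * ((P - Q) / \<beta>)"
      using t be by (simp add: field_simps)
    have "score i n \<alpha> \<beta> x = 1 / \<beta> + real i * ((P - Q) / \<beta>) - real (n + 1) * (t * ((P - Q) / \<beta>))"
      using score_eq[OF al be x, of i n] unfolding lx ex2 r .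
    then show ?thesis by (subst \<open>score i n \<alpha> \<beta> x = _\<close>) (use be in \<open>simp add: field_simps\<close>)
  qed
  have fp: "fos i n \<alpha> \<beta> x powr (\<tau> + 1) = exp ((\<tau> + 1) * (ln c + ln \<beta> - ln \<alpha> + (real i * \<beta> - 1) * ((P - Q) / \<beta>) + real (n + 1) * Q))"
    using fpos by (simp add: powr_def lnf)
  have Kf: "(\<beta> / \<alpha>) powr \<tau> * c powr (\<tau> + 1) = exp (\<tau> * (ln \<beta> - ln \<alpha>) + (\<tau> + 1) * ln c)"
    using al be c by (simp add: powr_def exp_add ln_div)
  have Gf: "t powr (b - 1) * (1 - t) powr (a - 1) = exp ((b - 1) * P + (a - 1) * Q)"
    using t by (simp add: powr_def exp_add P_def Q_def)
  have dphi: "1 / t + 1 / (1 - t) = exp (- P - Q)"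
    using t by (simp add: exp_diff exp_minus tP[symmetric] tQ[symmetric] field_simps)
  have nn: "real (n - i + 1) = real n - real i + 1" using assms(1) by simp
  have EE: "ln \<alpha> + (P - Q) / \<beta> + (- P - Q) - ln \<beta> + (\<tau> + 1) * (ln c + ln \<beta> - ln \<alpha> + (real i * \<beta> - 1) * ((P - Q) / \<beta>) + real (n + 1) * Q)
     = \<tau> * (ln \<beta> - ln \<alpha>) + (\<tau> + 1) * ln c + ((b - 1) * P + (a - 1) * Q)"
    unfolding adef bdef nn using be by (simp add: field_simps)
  have "exp (ln \<alpha> + (P - Q) / \<beta> + (- P - Q) - ln \<beta> + (\<tau> + 1) * (ln c + ln \<beta> - ln \<alpha> + (real i * \<beta> - 1) * ((P - Q) / \<beta>) + real (n + 1) * Q))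
     = \<alpha> * exp ((P - Q) / \<beta>) * exp (- P - Q) / \<beta> * exp ((\<tau> + 1) * (ln c + ln \<beta> - ln \<alpha> + (real i * \<beta> - 1) * ((P - Q) / \<beta>) + real (n + 1) * Q))"
    using al be by (simp only: exp_add exp_diff exp_ln)
  also have "exp (ln \<alpha> + (P - Q) / \<beta> + (- P - Q) - ln \<beta> + (\<tau> + 1) * (ln c + ln \<beta> - ln \<alpha> + (real i * \<beta> - 1) * ((P - Q) / \<beta>) + real (n + 1) * Q))
     = exp (\<tau> * (ln \<beta> - ln \<alpha>) + (\<tau> + 1) * ln c) * exp ((b - 1) * P + (a - 1) * Q)"
    unfolding EE by (simp only: exp_add)
  finally have key: "\<alpha> * exp ((P - Q) / \<beta>) * exp (- P - Q) / \<beta> * exp ((\<tau> + 1) * (ln c + ln \<beta> - ln \<alpha> + (real i * \<beta> - 1) * ((P - Q) / \<beta>) + real (n + 1) * Q))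
     = exp (\<tau> * (ln \<beta> - ln \<alpha>) + (\<tau> + 1) * ln c) * exp ((b - 1) * P + (a - 1) * Q)" by simp
  define S where "S = 1 + (P - Q) * (real i - real (n + 1) * t)"
  define E where "E = (\<tau> + 1) * (ln c + ln \<beta> - ln \<alpha> + (real i * \<beta> - 1) * ((P - Q) / \<beta>) + real (n + 1) * Q)"
  have xe: "\<alpha> * exp ((ln t - ln (1 - t)) / \<beta>) = x" by (simp add: x_def P_def Q_def)
  have "(\<alpha> * exp ((P - Q) / \<beta>) * (exp (- P - Q) / \<beta>)) * (S / \<beta> * exp E)
      = (\<alpha> * exp ((P - Q) / \<beta>) * exp (- P - Q) / \<beta> * exp E) * S / \<beta>"
    by (simp add: ac_simps)
  also have "\<dots> = (exp (\<tau> * (ln \<beta> - ln \<alpha>) + (\<tau> + 1) * ln c) / \<beta>) * (exp ((b - 1) * P + (a - 1) * Q) * S)"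
    unfolding E_def key by (simp add: ac_simps)
  finally have fin: "(\<alpha> * exp ((P - Q) / \<beta>) * (exp (- P - Q) / \<beta>)) * (S / \<beta> * exp E)
     = (exp (\<tau> * (ln \<beta> - ln \<alpha>) + (\<tau> + 1) * ln c) / \<beta>) * (exp ((b - 1) * P + (a - 1) * Q) * S)" .
  show ?thesis
    unfolding xe unfolding P_def[symmetric] Q_def[symmetric] c_def[symmetric] sc fp dphi Kf Gf
    using fin unfolding S_def E_def x_def by simp
qed


lemma alg_final:
  fixes B db da b r i \<tau> \<beta> :: real
  assumes b: "b > 0" and be: "\<beta> > 0" and ta: "\<tau> \<ge> 0" and r: "r > 0"
    and hb: "b = i * (\<tau> + 1) - \<tau> / \<beta>"
  shows "B + i * (B * (db - da)) - r * (b * B / (r * (\<tau> + 1)) * (db + 1 / b - da))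
     = B * (\<tau> / (1 + \<tau>)) * (1 / \<beta> * (db - da) + 1)"
proof -
  have "r * (b * B / (r * (\<tau> + 1)) * (db + 1 / b - da)) = B * (b * (db - da) + 1) / (\<tau> + 1)"
  proof -
    have "r * (b * B / (r * (\<tau> + 1))) = b * B / (\<tau> + 1)" using r by simp
    moreover have "b * (db + 1 / b - da) = b * (db - da) + 1" using b by (simp add: field_simps)
    ultimately show ?thesis
      by (metis (no_types, lifting) mult.assoc mult.commute times_divide_eq_left)
  qed
  also have "\<dots> = B * ((i * (\<tau> + 1) - \<tau> / \<beta>) * (db - da) + 1) / (\<tau> + 1)" using hb by simp
  finally have eq: "r * (b * B / (r * (\<tau> + 1)) * (db + 1 / b - da)) = B * ((i * (\<tau> + 1) - \<tau> / \<beta>) * (db - da) + 1) / (\<tau> + 1)" .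
  have t1: "\<tau> + 1 > 0" "1 + \<tau> > 0" "\<beta> + \<beta> * \<tau> > 0" using ta be by (auto simp: add_pos_nonneg)
  show ?thesis unfolding eq using be t1 by (simp add: field_simps)
qed

theorem theorem8:
  fixes n i :: nat and \<alpha> \<beta> \<tau> a b :: real
  assumes "1 \<le> n" and "1 \<le> i" and "i \<le> n"
    and "\<alpha> > 0" and "\<beta> > 0" and "\<tau> \<ge> 0"
    and "real i * \<beta> * (\<tau> + 1) > \<tau>"
    and "a = (real (n - i + 1) * \<tau> * \<beta> + real (n - i + 1) * \<beta> + \<tau>) / \<beta>"
    and "b = (real i * \<tau> * \<beta> + real i * \<beta> - \<tau>) / \<beta>"
  shows "((\<lambda>x. score i n \<alpha> \<beta> x * fos i n \<alpha> \<beta> x powr (\<tau> + 1)) has_integral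
            ((\<beta> / \<alpha>) powr \<tau> * cc i n powr (\<tau> + 1) / \<beta> * Beta a b * (\<tau> / (1 + \<tau>))
              * (1 / \<beta> * (Digamma b - Digamma a) + 1))) {0<..}
       \<and> xi i n \<alpha> \<tau> \<beta> = (\<beta> / \<alpha>) powr \<tau> * cc i n powr (\<tau> + 1) / \<beta> * Beta a b
              * (\<tau> / (1 + \<tau>)) * (1 / \<beta> * (Digamma b - Digamma a) + 1)
       \<and> K i n \<alpha> \<tau> \<beta> = J i n \<alpha> (2 * \<tau>) \<beta> - (xi i n \<alpha> \<tau> \<beta>)\<^sup>2"
proof -
  note in_ = assms(3) and al = assms(4) and be = assms(5) and ta = assms(6)
    and adef = assms(8) and bdef = assms(9)
  have nn: "real (n - i + 1) = real n - real i + 1" using in_ by simp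
  have bpos: "b > 0" unfolding bdef using assms(7) be by (simp add: field_simps)
  have apos: "a > 0"
  proof -
    have m: "real n - real i + 1 \<ge> 1" using in_ by simp
    have "(real n - real i + 1) * \<tau> * \<beta> \<ge> 0" using m ta be by simp
    moreover have "(real n - real i + 1) * \<beta> \<ge> \<beta>" using m be by simp
    ultimately have "0 < (real n - real i + 1) * \<tau> * \<beta> + (real n - real i + 1) * \<beta> + \<tau>"
      using be ta by linarith
    then show ?thesis unfolding adef nn using be by simp
  qed
  have ab: "a + b = real (n + 1) * (\<tau> + 1)" unfolding adef bdef nn using be by (simp add: field_simps)
  define Kc where "Kc = (\<beta> / \<alpha>) powr \<tau> * cc i n powr (\<tau> + 1) / \<beta>"
  define V where "V = Kc * Beta a b * (\<tau> / (1 + \<tau>)) * (1 / \<beta> * (Digamma b - Digamma a) + 1)"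
  define F where "F x = score i n \<alpha> \<beta> x * fos i n \<alpha> \<beta> x powr (\<tau> + 1)" for x
  define \<phi> where "\<phi> t = \<alpha> * exp ((ln t - ln (1 - t)) / \<beta>)" for t :: real
  define \<phi>' where "\<phi>' t = \<alpha> * exp ((ln t - ln (1 - t)) / \<beta>) * ((1 / t + 1 / (1 - t)) / \<beta>)" for t :: real
  define Bf where "Bf p q t = t powr (p - 1) * (1 - t) powr (q - 1)" for p q t :: real
  define Df where "Df p q t = t powr (p - 1) * (1 - t) powr (q - 1) * (ln t - ln (1 - t))" for p q t :: real
  define G where "G t = Bf b a t + real i * Df b a t - real (n + 1) * Df (b + 1) a t" for t
  have pw: "\<phi>' t * F (\<phi> t) = Kc * G t" if "t \<in> {0<..<1}" for t
  proof -
    have t: "0 < t" "t < 1" using that by auto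
    have "\<phi>' t * F (\<phi> t) = Kc * (t powr (b - 1) * (1 - t) powr (a - 1) * (1 + (ln t - ln (1 - t)) * (real i - real (n + 1) * t)))"
      unfolding \<phi>'_def F_def \<phi>_def Kc_def by (rule pointwise[OF in_ al be ta adef bdef t])
    also have "t powr (b - 1) * (1 - t) powr (a - 1) * (1 + (ln t - ln (1 - t)) * (real i - real (n + 1) * t)) = G t"
    proof -
      have tb: "t powr (b + 1 - 1) = t * t powr (b - 1)" using t by (simp add: powr_mult_base)
      show ?thesis unfolding G_def Bf_def Df_def tb by (simp add: algebra_simps)
    qed
    finally show ?thesis .
  qed
  have Bi: "(Bf b a has_integral Beta b a) {0<..<1}"
    using has_integral_Beta_real[OF bpos apos] unfolding Bf_def by (simp add: has_integral_Icc_iff_Ioo)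
  have Ba: "Bf b a absolutely_integrable_on {0<..<1}"
    using Bi unfolding Bf_def
    by (subst absolutely_integrable_on_iff_nonneg) (auto simp: integrable_on_def)
  have b1: "b + 1 > 0" using bpos by simp
  note D1 = beta_logdiff[OF bpos apos, folded Df_def]
  note D2 = beta_logdiff[OF b1 apos, folded Df_def]
  have Ga: "G absolutely_integrable_on {0<..<1}"
    unfolding G_def
    by (intro set_integral_diff(1) set_integral_add(1) set_integrable_mult_right Ba D1(1) D2(1))
  define IG where "IG = Beta b a + real i * (Beta b a * (Digamma b - Digamma a))
      - real (n + 1) * (Beta (b + 1) a * (Digamma (b + 1) - Digamma a))"
  have Gi: "(G has_integral IG) {0<..<1}"
    unfolding G_def IG_def
    by (intro has_integral_diff has_integral_add has_integral_mult_right Bi D1(2) D2(2))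
  have IGv: "IG = Beta a b * (\<tau> / (1 + \<tau>)) * (1 / \<beta> * (Digamma b - Digamma a) + 1)"
  proof -
    have bnz: "b \<notin> \<int>\<^sub>\<le>\<^sub>0" using bpos by (auto elim!: nonpos_Ints_cases)
    have B1: "Beta (b + 1) a = b * Beta b a / (real (n + 1) * (\<tau> + 1))"
    proof -
      have e: "(b + a) * Beta (b + 1) a = b * Beta b a" by (rule Beta_plus1_left[OF bnz])
      have p: "real (n + 1) * (\<tau> + 1) > 0" using ta by (intro mult_pos_pos) auto
      have "b + a = real (n + 1) * (\<tau> + 1)" using ab by simp
      with e have "real (n + 1) * (\<tau> + 1) * Beta (b + 1) a = b * Beta b a" by metis
      with p ta show ?thesis by (simp add: eq_divide_eq mult.commute)
    qed
    have P1: "Digamma (b + 1) = Digamma b + 1 / b" using bpos by (intro Digamma_plus1) auto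
    have hb: "b = real i * (\<tau> + 1) - \<tau> / \<beta>" unfolding bdef using be by (simp add: field_simps)
    have r: "real (n + 1) > 0" by simp
    show ?thesis unfolding IG_def B1 P1 Beta_commute[of a b]
      by (rule alg_final[OF bpos be ta r hb])
  qed
  have KGa: "(\<lambda>t. Kc * G t) absolutely_integrable_on {0<..<1}"
    using Ga by (rule set_integrable_mult_right)
  have KGi: "((\<lambda>t. Kc * G t) has_integral V) {0<..<1}"
    unfolding V_def using has_integral_mult_right[OF Gi, of Kc] unfolding IGv by (simp add: mult_ac)
  have phipos: "\<phi>' t > 0" if "t \<in> {0<..<1}" for t
    unfolding \<phi>'_def using that al be by (auto intro!: mult_pos_pos divide_pos_pos add_pos_pos)
  have eqS: "\<bar>\<phi>' t\<bar> * F (\<phi> t) = Kc * G t" if "t \<in> {0<..<1}" for t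
    using pw[OF that] phipos[OF that] by simp
  have L1: "(\<lambda>t. \<bar>\<phi>' t\<bar> * F (\<phi> t)) absolutely_integrable_on {0<..<1}"
    using KGa by (subst set_integrable_cong[OF refl refl eqS]) auto
  have L2: "integral {0<..<1} (\<lambda>t. \<bar>\<phi>' t\<bar> * F (\<phi> t)) = V"
    using KGi by (intro integral_unique) (subst has_integral_cong[OF eqS]; simp)
  have dphi: "(\<phi> has_field_derivative \<phi>' t) (at t within {0<..<1})" if "t \<in> {0<..<1}" for t
    unfolding \<phi>_def \<phi>'_def using that be
    by (auto intro!: derivative_eq_intros simp: field_simps)
  have inj: "inj_on \<phi> {0<..<1}"
  proof (rule inj_onI)
    fix s t assume s: "s \<in> {0<..<1}" and t: "t \<in> {0<..<1}" and e: "\<phi> s = \<phi> t"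
    then have "exp ((ln s - ln (1 - s)) / \<beta>) = exp ((ln t - ln (1 - t)) / \<beta>)"
      unfolding \<phi>_def using al by simp
    then have "ln s - ln (1 - s) = ln t - ln (1 - t)" using be by simp
    then have "exp (ln s - ln (1 - s)) = exp (ln t - ln (1 - t))" by simp
    then have "s / (1 - s) = t / (1 - t)" using s t by (simp add: exp_diff)
    then show "s = t" using s t by (simp add: field_simps)
  qed
  have img: "\<phi> ` {0<..<1} = {0<..}"
  proof
    show "\<phi> ` {0<..<1} \<subseteq> {0<..}" unfolding \<phi>_def using al by auto
    show "{0<..} \<subseteq> \<phi> ` {0<..<1}"
    proof
      fix x :: real assume "x \<in> {0<..}"
      then have x: "x > 0" by simp
      define u where "u = exp (\<beta> * ln (x / \<alpha>))"
      have u: "u > 0" unfolding u_def by simp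
      define t where "t = u / (1 + u)"
      have t: "0 < t" "t < 1" unfolding t_def using u by (auto simp: field_simps)
      have "t / (1 - t) = u" unfolding t_def using u by (simp add: field_simps)
      then have "ln (t / (1 - t)) = \<beta> * ln (x / \<alpha>)" by (simp add: u_def)
      then have "ln t - ln (1 - t) = \<beta> * ln (x / \<alpha>)" using t by (simp add: ln_divide_pos)
      then have "\<phi> t = x" unfolding \<phi>_def using be al x by simp
      then show "x \<in> \<phi> ` {0<..<1}" using t by force
    qed
  qed
  have cv: "F absolutely_integrable_on {0<..} \<and> integral {0<..} F = V"
    using has_absolute_integral_change_of_variables_1'[of "{0<..<1}" \<phi> \<phi>' F V] dphi inj L1 L2
    unfolding img by auto
  then have Fi: "(F has_integral V) {0<..}"
    using set_lebesgue_integral_eq_integral(1) integrable_integral by metis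
  have xiv: "xi i n \<alpha> \<tau> \<beta> = V" unfolding xi_def using cv unfolding F_def by simp
  show ?thesis
    using Fi xiv unfolding F_def V_def Kc_def K_def by simp
qed

end
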